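(* Assume conditions (i), (ii), (iv), (v) of Assumption A. Then \[ \lim_{h\to0}h^{2\alpha}L^2(h^{-1})\int_{\mathbb{R}}K_n^2(x)\,dx=\frac{1}{2\pi B^2}\int_{\mathbb{R}}|t|^{2\alpha}|\varphi_W(t)|^2\,dt. \]
   Context: Model: $\nu=\alpha F$ is the Lévy measure of a compound Poisson subordinator with intensity $\alpha$ and positive jump distribution $F$; $k(x)=\nu((x,\infty))$ for $x\ge0$, $k(x)=0$ for $x<0$; $\varphi(t)=\exp\big(\int_0^\infty(e^{itx}-1)\frac{k(x)}{x}dx\big)$ is the characteristic function of the stationary distribution of the OU process $dX_t=-\lambda X_tdt+dJ_{\lambda t}$; $\varphi_k(u)=\int_0^\infty e^{iux}k(x)dx$. $W$ is a kernel with Fourier transform $\varphi_W(u)=\int e^{iux}W(x)dx$; $h>0$ a bandwidth; $K_n(x)=\frac1{2\pi}\int_{\mathbb{R}}e^{-itx}\frac{\varphi_W(t)}{\varphi(t/h)}dt$. Conditions: (i) $\int_0^\infty(1\vee|x|^{2+\epsilon})k(x)dx<\infty$ for some $\epsilon>0$. (ii) $k(0)=\alpha$ with $2<\alpha<\infty$. (iv) $|\varphi_k(u)|\lesssim(1+|u|)^{-1}$, $|\varphi_k'(u)|\vee|\varphi_k''(u)|\lesssim(1+|u|)^{-2}$. (v) $W$ integrable, $\int W=1$, $\int|x|^{p+1}|W|<\infty$, $\int x^\ell W(x)dx=0$ for $\ell=1,\dots,p$ (for some integer $p\ge0$), $\varphi_W(u)=0$ for $|u|>1$, $\varphi_W$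 three times continuously differentiable. Slowly varying factor: under (ii) there exist a function $L:(1,\infty)\to[0,\infty)$ slowly varying at $\infty$ and a constant $B>0$ with $\lim_{|t|\to\infty}|t|^\alpha|\varphi(t)|/L(|t|)=B$; $L$ and $B$ denote such a fixed pair. *)

theory Defs
  imports "HOL-Probability.Probability"
begin

text \<open>Tail function k(x) = nu((x,infinity)) of the Levy measure nu = alpha F, and k(x)=0 for x<0.\<close>
definition kfun :: "real \<Rightarrow> real measure \<Rightarrow> real \<Rightarrow> real" where
  "kfun \<alpha> F x = (if x \<ge> 0 then \<alpha> * measure F {x<..} else 0)"

definition ou_cf :: "real \<Rightarrow> real measure \<Rightarrow> real \<Rightarrow> complex" where
  "ou_cf \<alpha> F t = exp (LINT x:{0<..}|lborel.
      (exp (\<i> * complex_of_real (t * x)) - 1) * complex_of_real (kfun \<alpha> F x / x))"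

definition phik :: "real \<Rightarrow> real measure \<Rightarrow> real \<Rightarrow> complex" where
  "phik \<alpha> F u = (LINT x:{0<..}|lborel. exp (\<i> * complex_of_real (u * x)) * complex_of_real (kfun \<alpha> F x))"

definition ft :: "(real \<Rightarrow> real) \<Rightarrow> real \<Rightarrow> complex" where
  "ft W u = (LINT x|lborel. exp (\<i> * complex_of_real (u * x)) * complex_of_real (W x))"

definition Kn :: "real \<Rightarrow> real measure \<Rightarrow> (real \<Rightarrow> real) \<Rightarrow> real \<Rightarrow> real \<Rightarrow> complex" where
  "Kn \<alpha> F W h x = complex_of_real (1 / (2 * pi)) *
     (LINT t|lborel. exp (- (\<i> * complex_of_real (t * x))) * ft W t / ou_cf \<alpha> F (t / h))"

definition slowly_varying :: "(real \<Rightarrow> real) \<Rightarrow> bool" where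
  "slowly_varying L \<longleftrightarrow> (\<forall>c>0. ((\<lambda>x. L (c * x) / L x) \<longlongrightarrow> 1) at_top)"

end

theory Submission
  imports Defs
begin

lemma fubini_bound:
  fixes f :: "real \<Rightarrow> real \<Rightarrow> complex" and a b :: "real \<Rightarrow> real"
  assumes meas[measurable]: "(\<lambda>(x,y). f x y) \<in> borel_measurable (lborel \<Otimes>\<^sub>M lborel)"
    and bd: "\<And>x y. cmod (f x y) \<le> a x * b y"
    and ia: "integrable lborel a" and ib: "integrable lborel b"
    and a0: "\<And>x. a x \<ge> 0" and b0: "\<And>y. b y \<ge> 0"
  shows "(LINT x|lborel. LINT y|lborel. f x y) = (LINT y|lborel. LINT x|lborel. f x y)"
proof -
  have [measurable]: "a \<in> borel_measurable borel" "b \<in> borel_measurable borel"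
    using ia ib by auto
  have ip: "integrable (lborel \<Otimes>\<^sub>M lborel) (\<lambda>(x,y). a x * b y)"
  proof (rule lborel_pair.Fubini_integrable)
    show "(\<lambda>(x,y). a x * b y) \<in> borel_measurable (lborel \<Otimes>\<^sub>M lborel)" by measurable
    show "integrable lborel (\<lambda>x. LINT y|lborel. norm ((\<lambda>(x,y). a x * b y) (x, y)))"
      using a0 b0 by (simp add: abs_mult ia integrable_mult_left)
    show "AE x in lborel. integrable lborel (\<lambda>y. (\<lambda>(x,y). a x * b y) (x, y))"
      using ib by simp
  qed
  have "integrable (lborel \<Otimes>\<^sub>M lborel) (\<lambda>(x,y). f x y)"
    by (rule Bochner_Integration.integrable_bound[OF ip]) (use bd a0 b0 in \<open>auto simp: abs_mult\<close>)
  then have "integrable (lborel \<Otimes>\<^sub>M lborel) (\<lambda>(y,x). f x y)"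
    by (subst (asm) lborel_pair.integrable_product_swap_iff[symmetric]) simp
  from lborel_pair.Fubini_integral[OF this] show ?thesis by simp
qed



lemma gauss_ft1:
  "(LINT x|lborel. complex_of_real (std_normal_density x) * iexp (t*x)) = complex_of_real (exp (-(t^2)/2))"
proof -
  have "char std_normal_distribution t = complex_of_real (exp (-(t^2)/2))"
    by (simp add: char_std_normal_distribution)
  moreover have "char std_normal_distribution t = (LINT x|lborel. complex_of_real (std_normal_density x) * iexp (t*x))"
    unfolding char_def
    by (subst integral_density) (auto simp: scaleR_conv_of_real)
  ultimately show ?thesis by simp
qed

lemma gauss_ft2:
  assumes n: "n > 0"
  shows "(LINT x|lborel. complex_of_real (exp (-((x/n)^2)/2)) * iexp (w*x))
        = complex_of_real (n * sqrt(2*pi) * exp (-((w*n)^2)/2))"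
proof -
  have "(LINT x|lborel. complex_of_real (exp (-((x/n)^2)/2)) * iexp (w*x))
     = \<bar>n\<bar> *\<^sub>R (LINT y|lborel. complex_of_real (exp (-(((0 + n*y)/n)^2)/2)) * iexp (w*(0 + n*y)))"
    by (rule lborel_integral_real_affine) (use n in auto)
  also have "(\<lambda>y. complex_of_real (exp (-(((0 + n*y)/n)^2)/2)) * iexp (w*(0 + n*y)))
      = (\<lambda>y. complex_of_real (sqrt (2*pi)) * (complex_of_real (std_normal_density y) * iexp ((w*n)*y)))"
    using n by (auto simp: std_normal_density_def mult_ac)
  also have "(LINT y|lborel. complex_of_real (sqrt (2*pi)) * (complex_of_real (std_normal_density y) * iexp ((w*n)*y)))
     = complex_of_real (sqrt (2*pi)) * complex_of_real (exp (-((w*n)^2)/2))"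
    by (simp only: integral_mult_right_zero gauss_ft1)
  finally show ?thesis using n by (simp add: scaleR_conv_of_real mult_ac)
qed



lemma iexp_measurable[measurable]: "iexp \<in> borel_measurable borel"
  by (intro borel_measurable_continuous_onI continuous_intros)

lemma cnj_measurable[measurable]: "cnj \<in> borel_measurable borel"
  by (intro borel_measurable_continuous_onI continuous_intros)

lemma plancherel_stepA:
  fixes g :: "real \<Rightarrow> complex" and M :: real and n :: real
  assumes gc: "continuous_on UNIV g" and gi: "integrable lborel g" and npos: "n > 0"
  defines "G \<equiv> \<lambda>x. (LINT t|lborel. iexp (-(t*x)) * g t)"
  shows "(LINT x|lborel. complex_of_real (exp (-((x/n)^2)/2)) * (G x * cnj (G x)))
        = (LINT s|lborel. g s * (LINT t|lborel. cnj (g t) * complex_of_real (n * sqrt(2*pi) * exp (-(((t-s)*n)^2)/2))))"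
proof -
  define \<psi> where "\<psi> x = exp (-((x/n)^2)/2)" for x
  define Cg where "Cg = (LINT t|lborel. cmod (g t))"
  have gm[measurable]: "g \<in> borel_measurable borel" using gc by (rule borel_measurable_continuous_onI)
  have Gm[measurable]: "G \<in> borel_measurable borel" unfolding G_def by measurable
  have GB: "cmod (G x) \<le> Cg" for x
    unfolding G_def Cg_def
    using integral_norm_bound[of lborel "\<lambda>t. iexp (-(t*x)) * g t"] by (simp add: norm_mult)
  have \<psi>m[measurable]: "\<psi> \<in> borel_measurable borel" unfolding \<psi>_def by measurable
  have \<psi>0: "0 \<le> \<psi> x" for x unfolding \<psi>_def by simp
  have \<psi>eq: "\<psi> x = sqrt (2*pi*n^2) * normal_density 0 n x" for x
    unfolding \<psi>_def normal_density_def using npos by (simp add: power_divide)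
  have \<psi>i: "integrable lborel \<psi>"
    unfolding \<psi>eq[abs_def] using integrable_normal_density[OF npos] by simp
  have gni: "integrable lborel (\<lambda>t. cmod (g t))" using gi by simp
  have cnjG: "cnj (G x) = (LINT t|lborel. iexp (t*x) * cnj (g t))" for x
  proof -
    have "cnj (G x) = (LINT t|lborel. cnj (iexp (-(t*x)) * g t))"
      unfolding G_def by (rule Bochner_Integration.integral_cnj[symmetric])
    also have "\<dots> = (LINT t|lborel. iexp (t*x) * cnj (g t))"
      by (rule Bochner_Integration.integral_cong) (simp_all add: exp_cnj)
    finally show ?thesis .
  qed
  have "(LINT x|lborel. complex_of_real (\<psi> x) * (G x * cnj (G x)))
      = (LINT x|lborel. LINT s|lborel. (complex_of_real (\<psi> x) * cnj (G x)) * (iexp (-(s*x)) * g s))"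
  proof (intro Bochner_Integration.integral_cong refl)
    fix x
    have cG: "c * G x = (LINT s|lborel. c * (iexp (-(s*x)) * g s))" for c
      by (simp add: G_def)
    show "complex_of_real (\<psi> x) * (G x * cnj (G x))
      = (LINT s|lborel. (complex_of_real (\<psi> x) * cnj (G x)) * (iexp (-(s*x)) * g s))"
      using cG[of "complex_of_real (\<psi> x) * cnj (G x)"] by (simp add: mult_ac)
  qed
  also have "\<dots> = (LINT s|lborel. LINT x|lborel. (complex_of_real (\<psi> x) * cnj (G x)) * (iexp (-(s*x)) * g s))"
  proof (rule fubini_bound[where a="\<lambda>x. \<psi> x * Cg" and b="\<lambda>s. cmod (g s)"])
    show "(\<lambda>(x, y). complex_of_real (\<psi> x) * cnj (G x) * (iexp (- (y * x)) * g y)) \<in> borel_measurable (lborel \<Otimes>\<^sub>M lborel)"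
      by measurable
    show "cmod (complex_of_real (\<psi> x) * cnj (G x) * (iexp (- (y * x)) * g y)) \<le> \<psi> x * Cg * cmod (g y)" for x y
      using GB[of x] \<psi>0[of x] by (simp add: norm_mult mult_right_mono mult_left_mono)
    show "integrable lborel (\<lambda>x. \<psi> x * Cg)" using \<psi>i by simp
    show "0 \<le> \<psi> x * Cg" for x using \<psi>0[of x] GB[of 0] by (simp add: order_trans[OF norm_ge_zero])
  qed (use gni in auto)
  also have "\<dots> = (LINT s|lborel. g s * (LINT x|lborel. LINT t|lborel. complex_of_real (\<psi> x) * iexp ((t - s)*x) * cnj (g t)))"
  proof (intro Bochner_Integration.integral_cong refl)
    fix s
    have "(LINT x|lborel. (complex_of_real (\<psi> x) * cnj (G x)) * (iexp (-(s*x)) * g s))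
       = g s * (LINT x|lborel. complex_of_real (\<psi> x) * iexp (-(s*x)) * cnj (G x))"
      by (simp flip: integral_mult_right_zero add: mult_ac)
    also have "(\<lambda>x. complex_of_real (\<psi> x) * iexp (-(s*x)) * cnj (G x))
       = (\<lambda>x. LINT t|lborel. complex_of_real (\<psi> x) * iexp ((t - s)*x) * cnj (g t))"
    proof
      fix x
      have "complex_of_real (\<psi> x) * iexp (-(s*x)) * cnj (G x)
          = (LINT t|lborel. (complex_of_real (\<psi> x) * iexp (-(s*x))) * (iexp (t*x) * cnj (g t)))"
        by (simp add: cnjG)
      also have "\<dots> = (LINT t|lborel. complex_of_real (\<psi> x) * iexp ((t - s)*x) * cnj (g t))"
        by (intro Bochner_Integration.integral_cong refl)
           (simp add: mult_ac exp_add[symmetric] algebra_simps)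
      finally show "complex_of_real (\<psi> x) * iexp (-(s*x)) * cnj (G x)
          = (LINT t|lborel. complex_of_real (\<psi> x) * iexp ((t - s)*x) * cnj (g t))" .
    qed
    finally show "(LINT x|lborel. (complex_of_real (\<psi> x) * cnj (G x)) * (iexp (-(s*x)) * g s))
       = g s * (LINT x|lborel. LINT t|lborel. complex_of_real (\<psi> x) * iexp ((t - s)*x) * cnj (g t))" .
  qed
  also have "\<dots> = (LINT s|lborel. g s * (LINT t|lborel. LINT x|lborel. complex_of_real (\<psi> x) * iexp ((t - s)*x) * cnj (g t)))"
  proof (intro Bochner_Integration.integral_cong refl)
    fix s
    have "(LINT x|lborel. LINT t|lborel. complex_of_real (\<psi> x) * iexp ((t - s)*x) * cnj (g t))
        = (LINT t|lborel. LINT x|lborel. complex_of_real (\<psi> x) * iexp ((t - s)*x) * cnj (g t))"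
    proof (rule fubini_bound[where a="\<psi>" and b="\<lambda>s. cmod (g s)"])
      show "(\<lambda>(x, y). complex_of_real (\<psi> x) * iexp ((y - s) * x) * cnj (g y)) \<in> borel_measurable (lborel \<Otimes>\<^sub>M lborel)"
        by measurable
      show "cmod (complex_of_real (\<psi> x) * iexp ((y - s) * x) * cnj (g y)) \<le> \<psi> x * cmod (g y)" for x y
        using \<psi>0[of x] by (simp add: norm_mult)
    qed (use gni \<psi>i \<psi>0 in auto)
    then show "g s * (LINT x|lborel. LINT t|lborel. complex_of_real (\<psi> x) * iexp ((t - s)*x) * cnj (g t))
        = g s * (LINT t|lborel. LINT x|lborel. complex_of_real (\<psi> x) * iexp ((t - s)*x) * cnj (g t))"
      by simp
  qed
  also have "\<dots> = (LINT s|lborel. g s * (LINT t|lborel. cnj (g t) * complex_of_real (n * sqrt(2*pi) * exp (-(((t-s)*n)^2)/2))))"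
  proof (intro Bochner_Integration.integral_cong refl)
    fix s
    have inner: "(LINT x|lborel. complex_of_real (\<psi> x) * iexp ((t - s)*x) * cnj (g t))
       = cnj (g t) * complex_of_real (n * sqrt(2*pi) * exp (-(((t-s)*n)^2)/2))" for t
    proof -
      have "(LINT x|lborel. complex_of_real (\<psi> x) * iexp ((t - s)*x) * cnj (g t))
         = cnj (g t) * (LINT x|lborel. complex_of_real (exp (-((x/n)^2)/2)) * iexp ((t - s)*x))"
        by (simp flip: integral_mult_right_zero add: mult_ac \<psi>_def)
      also have "\<dots> = cnj (g t) * complex_of_real (n * sqrt(2*pi) * exp (-(((t-s)*n)^2)/2))"
        by (simp only: gauss_ft2[OF npos])
      finally show ?thesis .
    qed
    show "g s * (LINT t|lborel. LINT x|lborel. complex_of_real (\<psi> x) * iexp ((t - s)*x) * cnj (g t))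
       = g s * (LINT t|lborel. cnj (g t) * complex_of_real (n * sqrt(2*pi) * exp (-(((t-s)*n)^2)/2)))"
      by (simp only: inner)
  qed
  finally show ?thesis unfolding \<psi>_def .
qed

lemma plancherel_stepB:
  fixes g :: "real \<Rightarrow> complex" and n :: real
  assumes gc: "continuous_on UNIV g" and npos: "n > 0"
  shows "(LINT t|lborel. cnj (g t) * complex_of_real (n * sqrt(2*pi) * exp (-(((t-s)*n)^2)/2)))
       = complex_of_real (2*pi) * (LINT y|lborel. complex_of_real (std_normal_density y) * cnj (g (s + (1/n) * y)))"
proof -
  have "(LINT t|lborel. cnj (g t) * complex_of_real (n * sqrt(2*pi) * exp (-(((t-s)*n)^2)/2)))
     = \<bar>1/n\<bar> *\<^sub>R (LINT y|lborel. cnj (g (s + (1/n) * y)) * complex_of_real (n * sqrt(2*pi) * exp (-((((s + (1/n) * y)-s)*n)^2)/2)))"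
    by (rule lborel_integral_real_affine) (use npos in auto)
  also have "(\<lambda>y. cnj (g (s + (1/n) * y)) * complex_of_real (n * sqrt(2*pi) * exp (-((((s + (1/n) * y)-s)*n)^2)/2)))
     = (\<lambda>y. complex_of_real (n * (2*pi)) * (complex_of_real (std_normal_density y) * cnj (g (s + (1/n) * y))))"
  proof
    fix y
    have "sqrt (2*pi) * exp (-((((s + (1/n) * y)-s)*n)^2)/2) = 2*pi * std_normal_density y"
      using npos by (simp add: std_normal_density_def field_simps real_sqrt_mult[symmetric])
    then show "cnj (g (s + (1/n) * y)) * complex_of_real (n * sqrt(2*pi) * exp (-((((s + (1/n) * y)-s)*n)^2)/2))
       = complex_of_real (n * (2*pi)) * (complex_of_real (std_normal_density y) * cnj (g (s + (1/n) * y)))"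
      by (simp add: mult_ac flip: of_real_mult)
  qed
  also have "\<bar>1/n\<bar> *\<^sub>R (LINT y|lborel. complex_of_real (n * (2*pi)) * (complex_of_real (std_normal_density y) * cnj (g (s + (1/n) * y))))
     = complex_of_real (2*pi) * (LINT y|lborel. complex_of_real (std_normal_density y) * cnj (g (s + (1/n) * y)))"
    using npos by (simp add: scaleR_conv_of_real)
  finally show ?thesis .
qed


lemma plancherel:
  fixes g :: "real \<Rightarrow> complex" and M :: real
  assumes gc: "continuous_on UNIV g" and gi: "integrable lborel g" and gb: "\<And>t. cmod (g t) \<le> M"
  shows "integrable lborel (\<lambda>x. (cmod (LINT t|lborel. iexp (-(t*x)) * g t))\<^sup>2) \<and>
    (LINT x|lborel. (cmod (LINT t|lborel. iexp (-(t*x)) * g t))\<^sup>2) = 2*pi * (LINT t|lborel. (cmod (g t))\<^sup>2)"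
proof -
  define G where "G \<equiv> \<lambda>x. (LINT t|lborel. iexp (-(t*x)) * g t)"
  define H where "H n s = (LINT t|lborel. cnj (g t) * complex_of_real (n * sqrt(2*pi) * exp (-(((t-s)*n)^2)/2)))" for n s :: real
  define E where "E n s = (LINT y|lborel. complex_of_real (std_normal_density y) * cnj (g (s + (1/n) * y)))" for n s :: real
  define f where "f m x = exp (-((x/real (Suc m))^2)/2) * (cmod (G x))\<^sup>2" for m x
  have gm[measurable]: "g \<in> borel_measurable borel" using gc by (rule borel_measurable_continuous_onI)
  have Gm[measurable]: "G \<in> borel_measurable borel" unfolding G_def by measurable
  have Hm[measurable]: "H n \<in> borel_measurable borel" for n unfolding H_def by measurable
  have M0: "0 \<le> M" using gb[of 0] norm_ge_zero[of "g 0"] by linarith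
  have gni: "integrable lborel (\<lambda>t. cmod (g t))" using gi by simp
  define Cg where "Cg = (LINT t|lborel. cmod (g t))"
  have GB: "cmod (G x) \<le> Cg" for x
    unfolding G_def Cg_def
    using integral_norm_bound[of lborel "\<lambda>t. iexp (-(t*x)) * g t"] by (simp add: norm_mult)
  have Cg0: "0 \<le> Cg" using GB[of 0] norm_ge_zero order_trans by blast
  have HE: "H n s = complex_of_real (2*pi) * E n s" if "n > 0" for n s
    unfolding H_def E_def by (rule plancherel_stepB[OF gc that])
  have Ei: "integrable lborel (\<lambda>y. complex_of_real (std_normal_density y) * cnj (g (s + (1/n) * y)))" for n s
    by (rule Bochner_Integration.integrable_bound[where f="\<lambda>y. std_normal_density y * M"])
       (use gb M0 in \<open>auto simp: norm_mult abs_mult intro!: mult_left_mono\<close>)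
  have Eb: "cmod (E n s) \<le> M" for n s
  proof -
    have "cmod (E n s) \<le> (LINT y|lborel. std_normal_density y * M)"
      unfolding E_def
      by (rule Bochner_Integration.integral_norm_bound_integral[OF Ei]) (use gb M0 in \<open>auto simp: norm_mult abs_mult intro!: mult_left_mono\<close>)
    then show ?thesis by simp
  qed
  have Elim: "(\<lambda>m. E (real (Suc m)) s) \<longlonglongrightarrow> cnj (g s)" for s
  proof -
    have "(\<lambda>m. E (real (Suc m)) s) \<longlonglongrightarrow> (LINT y|lborel. complex_of_real (std_normal_density y) * cnj (g s))"
      unfolding E_def
    proof (rule integral_dominated_convergence[where w="\<lambda>y. std_normal_density y * M"])
      show "AE y in lborel. (\<lambda>m. complex_of_real (std_normal_density y) * cnj (g (s + (1 / real (Suc m)) * y)))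
            \<longlonglongrightarrow> complex_of_real (std_normal_density y) * cnj (g s)"
      proof (intro AE_I2 tendsto_intros)
        fix y
        have "(\<lambda>m. s + (1 / real (Suc m)) * y) \<longlonglongrightarrow> s + 0 * y"
          by (intro tendsto_intros) (use LIMSEQ_inverse_real_of_nat in \<open>simp add: divide_inverse\<close>)
        then show "(\<lambda>m. g (s + (1 / real (Suc m)) * y)) \<longlonglongrightarrow> g s"
          using gc by (intro isCont_tendsto_compose[where g=g]) (auto simp: continuous_on_eq_continuous_at)
      qed
    qed (use gb M0 in \<open>auto simp: norm_mult abs_mult intro!: mult_left_mono\<close>)
    then show ?thesis by simp
  qed
  have Hlim: "(\<lambda>m. H (real (Suc m)) s) \<longlonglongrightarrow> complex_of_real (2*pi) * cnj (g s)" for s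
    unfolding HE[OF of_nat_0_less_iff[THEN iffD2, OF zero_less_Suc]]
    by (intro tendsto_intros Elim)
  have Hb: "cmod (H (real (Suc m)) s) \<le> 2*pi*M" for m s
    using Eb[of "real (Suc m)" s] by (simp add: HE norm_mult)
  have Ilim: "(\<lambda>m. LINT s|lborel. g s * H (real (Suc m)) s) \<longlonglongrightarrow> (LINT s|lborel. g s * (complex_of_real (2*pi) * cnj (g s)))"
  proof (rule integral_dominated_convergence[where w="\<lambda>s. cmod (g s) * (2*pi*M)"])
    show "AE x in lborel. (\<lambda>i. g x * H (real (Suc i)) x) \<longlonglongrightarrow> g x * (complex_of_real (2 * pi) * cnj (g x))"
      by (intro AE_I2 tendsto_intros Hlim)
    show "AE x in lborel. cmod (g x * H (real (Suc i)) x) \<le> cmod (g x) * (2 * pi * M)" for i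
      using Hb by (auto simp: norm_mult intro!: mult_left_mono)
  qed (use gni in auto)
  have gsq: "(LINT s|lborel. g s * (complex_of_real (2*pi) * cnj (g s))) = complex_of_real (2*pi * (LINT t|lborel. (cmod (g t))\<^sup>2))"
  proof -
    have "(LINT s|lborel. g s * (complex_of_real (2*pi) * cnj (g s))) = (LINT s|lborel. complex_of_real (2*pi * (cmod (g s))\<^sup>2))"
      by (intro Bochner_Integration.integral_cong refl) (metis complex_norm_square mult.left_commute of_real_mult)
    then show ?thesis by (simp only: integral_complex_of_real integral_mult_right_zero)
  qed
  have fA: "complex_of_real (LINT x|lborel. f m x) = (LINT s|lborel. g s * H (real (Suc m)) s)" for m
  proof -
    have "complex_of_real (LINT x|lborel. f m x) = (LINT x|lborel. complex_of_real (exp (-((x/real (Suc m))^2)/2)) * (G x * cnj (G x)))"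
    proof -
      have eq: "complex_of_real (exp (-((x/real (Suc m))^2)/2)) * (G x * cnj (G x)) = complex_of_real (f m x)" for x
        by (simp only: f_def of_real_mult complex_norm_square)
      show ?thesis by (simp only: eq integral_complex_of_real)
    qed
    also have "\<dots> = (LINT s|lborel. g s * H (real (Suc m)) s)"
      unfolding H_def G_def by (rule plancherel_stepA[OF gc gi]) simp
    finally show ?thesis .
  qed
  have flim: "(\<lambda>m. LINT x|lborel. f m x) \<longlonglongrightarrow> 2*pi * (LINT t|lborel. (cmod (g t))\<^sup>2)"
    using Ilim unfolding gsq fA[symmetric] tendsto_of_real_iff .
  have fi: "integrable lborel (f m)" for m
  proof -
    have "integrable lborel (\<lambda>x. sqrt (2*pi*(real (Suc m))^2) * normal_density 0 (real (Suc m)) x * Cg\<^sup>2)"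
      using integrable_normal_density[of "real (Suc m)"] by simp
    then show ?thesis
    proof (rule Bochner_Integration.integrable_bound)
      show "f m \<in> borel_measurable lborel" unfolding f_def by measurable
      show "AE x in lborel. norm (f m x) \<le> norm (sqrt (2*pi*(real (Suc m))^2) * normal_density 0 (real (Suc m)) x * Cg\<^sup>2)"
      proof (intro AE_I2)
        fix x
        have "exp (-((x/real (Suc m))^2)/2) = sqrt (2*pi*(real (Suc m))^2) * normal_density 0 (real (Suc m)) x"
          unfolding normal_density_def by (simp add: power_divide)
        moreover have "(cmod (G x))\<^sup>2 \<le> Cg\<^sup>2" using GB[of x] by (simp add: power_mono)
        ultimately show "norm (f m x) \<le> norm (sqrt (2*pi*(real (Suc m))^2) * normal_density 0 (real (Suc m)) x * Cg\<^sup>2)"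
          unfolding f_def by (simp add: mult_left_mono)
      qed
    qed
  qed
  have fmono: "AE x in lborel. mono (\<lambda>m. f m x)"
  proof (intro AE_I2 monoI)
    fix x and m k :: nat assume "m \<le> k"
    have "(x/real (Suc k))^2 \<le> (x/real (Suc m))^2"
      using \<open>m \<le> k\<close> by (simp add: power_divide frac_le)
    then show "f m x \<le> f k x" unfolding f_def by (intro mult_right_mono) auto
  qed
  have fpos: "AE x in lborel. 0 \<le> f m x" for m unfolding f_def by simp
  have fconv: "AE x in lborel. (\<lambda>m. f m x) \<longlonglongrightarrow> (cmod (G x))\<^sup>2"
  proof (intro AE_I2)
    fix x
    have "(\<lambda>m. x/real (Suc m)) \<longlonglongrightarrow> x * 0"
      using tendsto_mult[OF tendsto_const[of x] LIMSEQ_inverse_real_of_nat] by (simp add: divide_inverse)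
    then have "(\<lambda>m. exp (-((x/real (Suc m))^2)/2) * (cmod (G x))\<^sup>2) \<longlonglongrightarrow> exp (-((x*0)^2)/2) * (cmod (G x))\<^sup>2"
      by (intro tendsto_intros) auto
    then show "(\<lambda>m. f m x) \<longlonglongrightarrow> (cmod (G x))\<^sup>2" by (simp add: f_def)
  qed
  have um: "(\<lambda>x. (cmod (G x))\<^sup>2) \<in> borel_measurable lborel" by measurable
  from integral_monotone_convergence_nonneg[OF fi fmono fpos fconv flim um]
  show ?thesis unfolding G_def by simp
qed



lemma exp_i_minus1_le: "cmod (exp (\<i> * complex_of_real y) - 1) \<le> \<bar>y\<bar>"
  using iexp_approx1[of y 0] by simp

lemma exp_i_minus1_le2: "cmod (exp (\<i> * complex_of_real y) - 1) \<le> 2"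
proof -
  have "cmod (exp (\<i> * complex_of_real y) - 1) \<le> cmod (exp (\<i> * complex_of_real y)) + cmod (1::complex)"
    by (rule norm_triangle_ineq4)
  then show ?thesis by simp
qed

lemma k_meas0:
  assumes F_prob: "prob_space F" and F_sets: "sets F = sets borel"
  shows "kfun \<alpha> F \<in> borel_measurable borel"
proof -
  interpret prob_space F by (rule F_prob)
  have "mono (\<lambda>x. - measure F {x<..})"
  proof (rule monoI)
    fix a b :: real assume "a \<le> b"
    have "measure F {b<..} \<le> measure F {a<..}"
      by (rule finite_measure_mono) (use \<open>a \<le> b\<close> F_sets in auto)
    then show "- measure F {a<..} \<le> - measure F {b<..}" by simp
  qed
  then have m: "(\<lambda>x. - measure F {x<..}) \<in> borel_measurable borel" by (rule borel_measurable_mono)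
  have "kfun \<alpha> F = (\<lambda>x. indicator {0..} x * (\<alpha> * - (- measure F {x<..})))"
    by (auto simp: kfun_def fun_eq_iff)
  also have "\<dots> \<in> borel_measurable borel" using m by measurable
  finally show ?thesis .
qed

context
  fixes \<alpha> :: real and F :: "real measure"
  assumes F_prob: "prob_space F" and F_sets: "sets F = sets borel" and apos: "0 < \<alpha>"
    and kint: "set_integrable lborel {0<..} (kfun \<alpha> F)"
begin

lemma k_nonneg: "0 \<le> kfun \<alpha> F x"
  using apos by (auto simp: kfun_def)

lemma k_le: "kfun \<alpha> F x \<le> \<alpha>"
  using apos prob_space.prob_le_1[OF F_prob] by (auto simp: kfun_def intro: mult_left_le)

lemma k_anti: assumes "0 \<le> a" "a \<le> b" shows "kfun \<alpha> F b \<le> kfun \<alpha> F a"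
proof -
  interpret prob_space F by (rule F_prob)
  have "measure F {b<..} \<le> measure F {a<..}"
    by (rule finite_measure_mono) (use assms F_sets in auto)
  then show ?thesis using assms apos by (auto simp: kfun_def)
qed

lemma k_meas[measurable]: "kfun \<alpha> F \<in> borel_measurable borel"
proof -
  interpret prob_space F by (rule F_prob)
  have "mono (\<lambda>x. - measure F {x<..})"
  proof (rule monoI)
    fix a b :: real assume "a \<le> b"
    have "measure F {b<..} \<le> measure F {a<..}"
      by (rule finite_measure_mono) (use \<open>a \<le> b\<close> F_sets in auto)
    then show "- measure F {a<..} \<le> - measure F {b<..}" by simp
  qed
  then have m: "(\<lambda>x. - measure F {x<..}) \<in> borel_measurable borel" by (rule borel_measurable_mono)
  have "kfun \<alpha> F = (\<lambda>x. indicator {0..} x * (\<alpha> * - (- measure F {x<..})))"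
    by (auto simp: kfun_def fun_eq_iff)
  also have "\<dots> \<in> borel_measurable borel" using m by measurable
  finally show ?thesis .
qed

lemma integrand_bound:
  assumes "\<bar>t\<bar> \<le> T"
  shows "cmod (indicator {0<..} x *\<^sub>R ((exp (\<i> * complex_of_real (t * x)) - 1) * complex_of_real (kfun \<alpha> F x / x)))
     \<le> T * \<alpha> * indicator {0<..1} x + 2 * (indicator {0<..} x * kfun \<alpha> F x)"
proof (cases "x > 0")
  case False then show ?thesis using assms apos by (auto simp: indicator_def)
next
  case x: True
  have k0: "0 \<le> kfun \<alpha> F x" by (rule k_nonneg)
  have "cmod ((exp (\<i> * complex_of_real (t * x)) - 1) * complex_of_real (kfun \<alpha> F x / x))
        = cmod (exp (\<i> * complex_of_real (t * x)) - 1) * (kfun \<alpha> F x / x)"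
    using x k0 by (simp add: norm_mult norm_divide)
  also have "\<dots> \<le> T * \<alpha> * indicator {0<..1} x + 2 * kfun \<alpha> F x"
  proof (cases "x \<le> 1")
    case True
    have "cmod (exp (\<i> * complex_of_real (t * x)) - 1) * (kfun \<alpha> F x / x) \<le> (\<bar>t\<bar> * x) * (kfun \<alpha> F x / x)"
      using exp_i_minus1_le[of "t*x"] x k0 by (intro mult_right_mono) (auto simp: abs_mult)
    also have "\<dots> = \<bar>t\<bar> * kfun \<alpha> F x" using x by simp
    also have "\<dots> \<le> T * \<alpha>" using assms k_le[of x] k0 by (intro mult_mono) auto
    finally show ?thesis using True x k0 by (simp add: indicator_def)
  next
    case False
    have "cmod (exp (\<i> * complex_of_real (t * x)) - 1) * (kfun \<alpha> F x / x) \<le> 2 * (kfun \<alpha> F x / x)"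
      using exp_i_minus1_le2[of "t*x"] x k0 by (intro mult_right_mono) auto
    also have "\<dots> \<le> 2 * kfun \<alpha> F x" using False k0 by (simp add: divide_le_eq mult_le_cancel_left1 mult_right_le_one_le)
    finally show ?thesis using False x assms apos by (simp add: indicator_def)
  qed
  finally show ?thesis using x by simp
qed

lemma bound_integrable: "integrable lborel (\<lambda>x. T * \<alpha> * indicator {0<..1} x + 2 * (indicator {0<..} x * kfun \<alpha> F x))"
proof -
  have "integrable lborel (\<lambda>x::real. indicator {0<..1} x :: real)"
  proof -
    have "emeasure lborel {0<..1::real} = 1" using emeasure_lborel_Ioc[of "0::real" 1] by simp
    then show ?thesis by (simp add: integrable_indicator_iff)
  qed
  moreover have "integrable lborel (\<lambda>x. indicator {0<..} x * kfun \<alpha> F x)"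
    using kint by (simp add: set_integrable_def)
  ultimately show ?thesis by auto
qed

lemma integrand_integrable:
  "integrable lborel (\<lambda>x. indicator {0<..} x *\<^sub>R ((exp (\<i> * complex_of_real (t * x)) - 1) * complex_of_real (kfun \<alpha> F x / x)))"
  by (rule Bochner_Integration.integrable_bound[OF bound_integrable[of "\<bar>t\<bar>"]])
     (use integrand_bound[of t "\<bar>t\<bar>"] k_nonneg apos in \<open>auto intro!: AE_I2 simp: abs_mult indicator_def\<close>)


lemma ou_cf_eq: "ou_cf \<alpha> F t = exp (LINT x|lborel. indicator {0<..} x *\<^sub>R ((exp (\<i> * complex_of_real (t * x)) - 1) * complex_of_real (kfun \<alpha> F x / x)))"
  by (simp add: ou_cf_def set_lebesgue_integral_def)

lemma Iint_cont: "isCont (\<lambda>t. LINT x|lborel. indicator {0<..} x *\<^sub>R ((exp (\<i> * complex_of_real (t * x)) - 1) * complex_of_real (kfun \<alpha> F x / x))) t0"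
proof (rule continuous_at_sequentiallyI)
  fix u :: "nat \<Rightarrow> real" assume u: "u \<longlonglongrightarrow> t0"
  then have "Bseq u" by (intro convergent_imp_Bseq convergentI)
  then obtain K where K: "\<And>n. norm (u n) \<le> K" by (metis BseqE)
  show "(\<lambda>n. LINT x|lborel. indicator {0<..} x *\<^sub>R ((exp (\<i> * complex_of_real (u n * x)) - 1) * complex_of_real (kfun \<alpha> F x / x)))
     \<longlonglongrightarrow> (LINT x|lborel. indicator {0<..} x *\<^sub>R ((exp (\<i> * complex_of_real (t0 * x)) - 1) * complex_of_real (kfun \<alpha> F x / x)))"
  proof (rule integral_dominated_convergence[where w="\<lambda>x. K * \<alpha> * indicator {0<..1} x + 2 * (indicator {0<..} x * kfun \<alpha> F x)"])
    show "integrable lborel (\<lambda>x. K * \<alpha> * indicator {0<..1} x + 2 * (indicator {0<..} x * kfun \<alpha> F x))"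
      by (rule bound_integrable)
    show "AE x in lborel. (\<lambda>n. indicator {0<..} x *\<^sub>R ((exp (\<i> * complex_of_real (u n * x)) - 1) * complex_of_real (kfun \<alpha> F x / x)))
       \<longlonglongrightarrow> indicator {0<..} x *\<^sub>R ((exp (\<i> * complex_of_real (t0 * x)) - 1) * complex_of_real (kfun \<alpha> F x / x))"
      by (intro AE_I2 tendsto_intros u)
    show "AE x in lborel. cmod (indicator {0<..} x *\<^sub>R ((exp (\<i> * complex_of_real (u n * x)) - 1) * complex_of_real (kfun \<alpha> F x / x)))
       \<le> K * \<alpha> * indicator {0<..1} x + 2 * (indicator {0<..} x * kfun \<alpha> F x)" for n
      using integrand_bound[of "u n" K] K[of n] by auto
  qed measurable
qed

lemma ou_cf_cont: "continuous_on UNIV (ou_cf \<alpha> F)"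
proof -
  have "continuous_on UNIV (\<lambda>t. LINT x|lborel. indicator {0<..} x *\<^sub>R ((exp (\<i> * complex_of_real (t * x)) - 1) * complex_of_real (kfun \<alpha> F x / x)))"
    by (intro continuous_at_imp_continuous_on ballI Iint_cont)
  then show ?thesis unfolding ou_cf_eq[abs_def] by (intro continuous_intros)
qed

lemma ou_cf_nz: "ou_cf \<alpha> F t \<noteq> 0" by (simp add: ou_cf_def)

lemma ou_cf_neg: "ou_cf \<alpha> F (-t) = cnj (ou_cf \<alpha> F t)"
proof -
  have "cnj (ou_cf \<alpha> F t) = exp (cnj (LINT x|lborel. indicator {0<..} x *\<^sub>R ((exp (\<i> * complex_of_real (t * x)) - 1) * complex_of_real (kfun \<alpha> F x / x))))"
    by (simp add: ou_cf_eq exp_cnj)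
  also have "cnj (LINT x|lborel. indicator {0<..} x *\<^sub>R ((exp (\<i> * complex_of_real (t * x)) - 1) * complex_of_real (kfun \<alpha> F x / x)))
     = (LINT x|lborel. cnj (indicator {0<..} x *\<^sub>R ((exp (\<i> * complex_of_real (t * x)) - 1) * complex_of_real (kfun \<alpha> F x / x))))"
    by (rule Bochner_Integration.integral_cnj[symmetric])
  also have "\<dots> = (LINT x|lborel. indicator {0<..} x *\<^sub>R ((exp (\<i> * complex_of_real ((-t) * x)) - 1) * complex_of_real (kfun \<alpha> F x / x)))"
    by (rule Bochner_Integration.integral_cong) (simp_all add: exp_cnj)
  finally show ?thesis by (simp add: ou_cf_eq)
qed

definition Rint :: "real \<Rightarrow> real" where
  "Rint t = (LINT x|lborel. indicator {0<..} x * ((cos (t*x) - 1) * (kfun \<alpha> F x / x)))"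

lemma norm_ou_cf: "cmod (ou_cf \<alpha> F t) = exp (Rint t)"
proof -
  have "Re (LINT x|lborel. indicator {0<..} x *\<^sub>R ((exp (\<i> * complex_of_real (t * x)) - 1) * complex_of_real (kfun \<alpha> F x / x)))
     = (LINT x|lborel. Re (indicator {0<..} x *\<^sub>R ((exp (\<i> * complex_of_real (t * x)) - 1) * complex_of_real (kfun \<alpha> F x / x))))"
    by (rule integral_Re[symmetric, OF integrand_integrable])
  also have "\<dots> = Rint t"
    unfolding Rint_def by (rule Bochner_Integration.integral_cong) (simp_all add: Re_exp)
  finally show ?thesis by (simp add: ou_cf_eq)
qed

lemma Rint_integrable: "integrable lborel (\<lambda>x. indicator {0<..} x * ((cos (t*x) - 1) * (kfun \<alpha> F x / x)))"
proof -
  have "integrable lborel (\<lambda>x. Re (indicator {0<..} x *\<^sub>R ((exp (\<i> * complex_of_real (t * x)) - 1) * complex_of_real (kfun \<alpha> F x / x))))"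
    using integrand_integrable by (rule integrable_Re)
  then show ?thesis by (simp add: Re_exp)
qed

lemma Rint_nonpos: "Rint t \<le> 0"
proof -
  have "0 \<le> (LINT x|lborel. - (indicator {0<..} x * ((cos (t*x) - 1) * (kfun \<alpha> F x / x))))"
    by (rule integral_nonneg_AE) (use k_nonneg in \<open>auto intro!: AE_I2 mult_nonpos_nonneg divide_nonpos_pos simp: indicator_def\<close>)
  then show ?thesis unfolding Rint_def by simp
qed

lemma Rint_even: "Rint (-t) = Rint t"
  unfolding Rint_def by simp

lemma Rint_subst:
  assumes t: "0 < t"
  shows "Rint t = (LINT u|lborel. indicator {0<..} u * ((cos u - 1) * (kfun \<alpha> F (u/t) / u)))"
    and "integrable lborel (\<lambda>u. indicator {0<..} u * ((cos u - 1) * (kfun \<alpha> F (u/t) / u)))"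
proof -
  define f where "f x = indicator {0<..} x * ((cos (t*x) - 1) * (kfun \<alpha> F x / x))" for x
  have eq: "f (0 + (1/t) * u) = t * (indicator {0<..} u * ((cos u - 1) * (kfun \<alpha> F (u/t) / u)))" for u
    using t by (simp add: f_def indicator_def field_simps)
  have "Rint t = \<bar>1/t\<bar> *\<^sub>R (LINT u|lborel. f (0 + (1/t) * u))"
    unfolding Rint_def f_def[symmetric] by (rule lborel_integral_real_affine) (use t in auto)
  also have "\<dots> = (LINT u|lborel. indicator {0<..} u * ((cos u - 1) * (kfun \<alpha> F (u/t) / u)))"
    using t by (simp only: eq integral_mult_right_zero) simp
  finally show "Rint t = (LINT u|lborel. indicator {0<..} u * ((cos u - 1) * (kfun \<alpha> F (u/t) / u)))" .
  have "integrable lborel (\<lambda>u. f (0 + (1/t) * u))"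
    by (rule lborel_integrable_real_affine) (use t Rint_integrable[of t] in \<open>auto simp: f_def\<close>)
  then have "integrable lborel (\<lambda>u. (1/t) * f (0 + (1/t) * u))" by simp
  then show "integrable lborel (\<lambda>u. indicator {0<..} u * ((cos u - 1) * (kfun \<alpha> F (u/t) / u)))"
    using t by (simp only: eq) simp
qed

lemma Rint_mono: assumes "0 < t" "t \<le> s" shows "Rint s \<le> Rint t"
proof -
  have s: "0 < s" using assms by simp
  show ?thesis
    unfolding Rint_subst(1)[OF assms(1)] Rint_subst(1)[OF s]
  proof (rule integral_mono[OF Rint_subst(2)[OF s] Rint_subst(2)[OF assms(1)]])
    fix u :: real
    show "indicator {0<..} u * ((cos u - 1) * (kfun \<alpha> F (u/s) / u)) \<le> indicator {0<..} u * ((cos u - 1) * (kfun \<alpha> F (u/t) / u))"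
    proof (cases "u > 0")
      case True
      have "kfun \<alpha> F (u/t) \<le> kfun \<alpha> F (u/s)"
        by (rule k_anti) (use True assms in \<open>auto simp: frac_le\<close>)
      then have "kfun \<alpha> F (u/t) / u \<le> kfun \<alpha> F (u/s) / u" using True by (simp add: divide_right_mono)
      moreover have "cos u - 1 \<le> 0" by simp
      ultimately have "(cos u - 1) * (kfun \<alpha> F (u/s) / u) \<le> (cos u - 1) * (kfun \<alpha> F (u/t) / u)"
        by (rule mult_left_mono_neg)
      then show ?thesis using True by simp
    qed simp
  qed
qed

lemma norm_ou_cf_mono: assumes "\<bar>t\<bar> \<le> \<bar>s\<bar>" shows "cmod (ou_cf \<alpha> F s) \<le> cmod (ou_cf \<alpha> F t)"
proof -
  have "Rint s \<le> Rint t"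
  proof (cases "t = 0")
    case True
    have "Rint 0 = 0" by (simp add: Rint_def)
    then show ?thesis using True Rint_nonpos[of s] by simp
  next
    case False
    have "Rint s = Rint \<bar>s\<bar>" "Rint t = Rint \<bar>t\<bar>"
      by (auto simp: abs_if Rint_even)
    moreover have "Rint \<bar>s\<bar> \<le> Rint \<bar>t\<bar>" using False assms by (intro Rint_mono) auto
    ultimately show ?thesis by simp
  qed
  then show ?thesis by (simp add: norm_ou_cf)
qed

end



lemma ft_neg: "ft W (-u) = cnj (ft W u)"
proof -
  have "cnj (ft W u) = (LINT x|lborel. cnj (exp (\<i> * complex_of_real (u * x)) * complex_of_real (W x)))"
    unfolding ft_def by (rule Bochner_Integration.integral_cnj[symmetric])
  also have "\<dots> = ft W (-u)"
    unfolding ft_def by (rule Bochner_Integration.integral_cong) (simp_all add: exp_cnj)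
  finally show ?thesis by simp
qed

lemma ft_bound: "cmod (ft W u) \<le> (LINT x|lborel. \<bar>W x\<bar>)"
  unfolding ft_def
  using integral_norm_bound[of lborel "\<lambda>x. exp (\<i> * complex_of_real (u * x)) * complex_of_real (W x)"]
  by (simp add: norm_mult)

lemma ft_cont:
  assumes "\<And>u. (ft W has_vector_derivative w1 u) (at u)"
  shows "continuous_on UNIV (ft W)"
  by (intro continuous_at_imp_continuous_on ballI has_vector_derivative_continuous[OF assms])

lemma fourier_real:
  fixes g :: "real \<Rightarrow> complex"
  assumes sym: "\<And>t. g (-t) = cnj (g t)"
  shows "cnj (LINT t|lborel. iexp (-(t*x)) * g t) = (LINT t|lborel. iexp (-(t*x)) * g t)"
proof -
  have "cnj (LINT t|lborel. iexp (-(t*x)) * g t) = (LINT t|lborel. cnj (iexp (-(t*x)) * g t))"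
    by (rule Bochner_Integration.integral_cnj[symmetric])
  also have "\<dots> = (LINT t|lborel. iexp (t*x) * g (-t))"
    by (rule Bochner_Integration.integral_cong) (simp_all add: exp_cnj sym)
  also have "\<dots> = \<bar>-1\<bar> *\<^sub>R (LINT u|lborel. iexp ((0 + (-1) * u)*x) * g (-(0 + (-1) * u)))"
    by (rule lborel_integral_real_affine) simp
  also have "\<dots> = (LINT t|lborel. iexp (-(t*x)) * g t)"
    by simp
  finally show ?thesis .
qed

lemma sq_real_complex: "cnj z = z \<Longrightarrow> z\<^sup>2 = complex_of_real ((cmod z)\<^sup>2)"
proof -
  assume "cnj z = z"
  then have "z * cnj z = z\<^sup>2" by (simp add: power2_eq_square)
  then show ?thesis by (simp only: complex_norm_square)
qed



lemma Kn_sq_integral: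
  fixes \<alpha> :: real and F :: "real measure" and W :: "real \<Rightarrow> real" and w1 :: "real \<Rightarrow> complex"
  assumes F_prob: "prob_space F" and F_sets: "sets F = sets borel" and apos: "0 < \<alpha>"
    and kint: "set_integrable lborel {0<..} (kfun \<alpha> F)"
    and w1: "\<And>u. (ft W has_vector_derivative w1 u) (at u)"
    and W_supp: "\<And>u. \<bar>u\<bar> > 1 \<Longrightarrow> ft W u = 0"
    and h: "0 < h"
  shows "(LINT x|lborel. (Kn \<alpha> F W h x)\<^sup>2) = complex_of_real (1/(2*pi) * (LINT t|lborel. (cmod (ft W t / ou_cf \<alpha> F (t/h)))\<^sup>2))"
proof -
  define g where "g t = ft W t / ou_cf \<alpha> F (t/h)" for t
  define G where "G x = (LINT t|lborel. iexp (-(t*x)) * g t)" for x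
  define Wn where "Wn = (LINT x|lborel. \<bar>W x\<bar>)"
  define M where "M = Wn / cmod (ou_cf \<alpha> F (1/h))"
  have ftc: "continuous_on UNIV (ft W)" by (rule ft_cont[OF w1])
  have phic: "continuous_on UNIV (ou_cf \<alpha> F)" by (rule ou_cf_cont[OF F_prob F_sets apos kint])
  have phinz: "ou_cf \<alpha> F t \<noteq> 0" for t by (simp add: ou_cf_def)
  have gc: "continuous_on UNIV g"
    unfolding g_def
    by (intro continuous_on_divide ftc continuous_on_compose2[OF phic] continuous_intros) (use h in \<open>auto simp: phinz\<close>)
  have Wn0: "0 \<le> Wn" unfolding Wn_def by simp
  have M0: "0 \<le> M" unfolding M_def using Wn0 by simp
  have gb: "cmod (g t) \<le> M" for t
  proof (cases "\<bar>t\<bar> \<le> 1")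
    case True
    have "cmod (ou_cf \<alpha> F (1/h)) \<le> cmod (ou_cf \<alpha> F (t/h))"
      by (rule norm_ou_cf_mono[OF F_prob F_sets apos kint]) (use True h in \<open>auto simp: divide_right_mono abs_divide\<close>)
    moreover have "0 < cmod (ou_cf \<alpha> F (1/h))" using phinz by simp
    moreover have "cmod (ft W t) \<le> Wn" unfolding Wn_def by (rule ft_bound)
    ultimately show ?thesis
      unfolding g_def M_def norm_divide by (intro frac_le) (auto intro: Wn0)
  next
    case False then show ?thesis using W_supp[of t] M0 by (simp add: g_def)
  qed
  have gm[measurable]: "g \<in> borel_measurable borel" using gc by (rule borel_measurable_continuous_onI)
  have gi: "integrable lborel g"
  proof (rule Bochner_Integration.integrable_bound[where f="\<lambda>t. M * indicator {-1..1} t"])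
    show "integrable lborel (\<lambda>t::real. M * indicator {-1..1} t)"
      by (simp add: integrable_indicator_iff)
    show "AE t in lborel. cmod (g t) \<le> norm (M * indicator {- 1..1} t)"
      using gb W_supp M0 by (auto intro!: AE_I2 simp: indicator_def g_def)
  qed simp
  have sym: "g (-t) = cnj (g t)" for t
    unfolding g_def using ft_neg[of W t] ou_cf_neg[OF F_prob F_sets apos kint, of "t/h"] by simp
  have P: "integrable lborel (\<lambda>x. (cmod (G x))\<^sup>2) \<and> (LINT x|lborel. (cmod (G x))\<^sup>2) = 2*pi * (LINT t|lborel. (cmod (g t))\<^sup>2)"
    unfolding G_def by (rule plancherel[OF gc gi gb])
  have KnG: "Kn \<alpha> F W h x = complex_of_real (1/(2*pi)) * G x" for x
    unfolding Kn_def G_def g_def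
    by (intro arg_cong[where f="\<lambda>z. complex_of_real (1/(2*pi)) * z"] Bochner_Integration.integral_cong refl) simp
  have Ksq: "(Kn \<alpha> F W h x)\<^sup>2 = complex_of_real ((1/(2*pi))\<^sup>2 * (cmod (G x))\<^sup>2)" for x
  proof -
    have "(G x)\<^sup>2 = complex_of_real ((cmod (G x))\<^sup>2)"
      by (rule sq_real_complex) (unfold G_def, rule fourier_real[where g=g, OF sym])
    then show ?thesis by (simp add: KnG power_mult_distrib power_divide)
  qed
  have "(LINT x|lborel. (Kn \<alpha> F W h x)\<^sup>2) = complex_of_real ((1/(2*pi))\<^sup>2 * (LINT x|lborel. (cmod (G x))\<^sup>2))"
    by (simp only: Ksq integral_complex_of_real integral_mult_right_zero)
  also have "\<dots> = complex_of_real (1/(2*pi) * (LINT t|lborel. (cmod (g t))\<^sup>2))"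
    using P by (simp add: power2_eq_square)
  finally show ?thesis unfolding g_def .
qed



lemma main_limit:
  fixes \<alpha> :: real and F :: "real measure" and W :: "real \<Rightarrow> real" and w1 :: "real \<Rightarrow> complex"
    and L :: "real \<Rightarrow> real" and B :: real
  assumes F_prob: "prob_space F" and F_sets: "sets F = sets borel" and apos: "0 < \<alpha>"
    and kint: "set_integrable lborel {0<..} (kfun \<alpha> F)"
    and w1: "\<And>u. (ft W has_vector_derivative w1 u) (at u)"
    and W_supp: "\<And>u. \<bar>u\<bar> > 1 \<Longrightarrow> ft W u = 0"
    and L_nonneg: "\<And>x. x > 1 \<Longrightarrow> L x \<ge> 0"
    and L_sv: "slowly_varying L"
    and B_pos: "B > 0"
    and L_B: "((\<lambda>t. \<bar>t\<bar> powr \<alpha> * cmod (ou_cf \<alpha> F t) / L \<bar>t\<bar>) \<longlongrightarrow> B) at_infinity"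
  shows "((\<lambda>h. LINT t|lborel. h powr (2*\<alpha>) * (L (1/h))\<^sup>2 * (cmod (ft W t / ou_cf \<alpha> F (t/h)))\<^sup>2)
          \<longlongrightarrow> (LINT t|lborel. \<bar>t\<bar> powr (2*\<alpha>) * (cmod (ft W t))\<^sup>2 / B\<^sup>2)) (at_right 0)"
proof -
  define Q where "Q u = \<bar>u\<bar> powr \<alpha> * cmod (ou_cf \<alpha> F u) / L \<bar>u\<bar>" for u
  define s where "s y t = (L y)\<^sup>2 / y powr (2*\<alpha>) * (cmod (ft W t))\<^sup>2 / (cmod (ou_cf \<alpha> F (t*y)))\<^sup>2" for y t
  define f where "f t = \<bar>t\<bar> powr (2*\<alpha>) * (cmod (ft W t))\<^sup>2 / B\<^sup>2" for t
  define w where "w t = 4 / B\<^sup>2 * (cmod (ft W t))\<^sup>2" for t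
  define Wn where "Wn = (LINT x|lborel. \<bar>W x\<bar>)"
  have QB: "(Q \<longlongrightarrow> B) at_infinity" unfolding Q_def using L_B .
  have QBtop: "(Q \<longlongrightarrow> B) at_top" by (rule tendsto_mono[OF at_top_le_at_infinity QB])
  have ftc: "continuous_on UNIV (ft W)" by (rule ft_cont[OF w1])
  have phic: "continuous_on UNIV (ou_cf \<alpha> F)" by (rule ou_cf_cont[OF F_prob F_sets apos kint])
  have ftm[measurable]: "ft W \<in> borel_measurable borel" using ftc by (rule borel_measurable_continuous_onI)
  have phim[measurable]: "ou_cf \<alpha> F \<in> borel_measurable borel" using phic by (rule borel_measurable_continuous_onI)
  have phinz: "ou_cf \<alpha> F t \<noteq> 0" for t by (simp add: ou_cf_def)
  have e2: "x powr (2*\<alpha>) = (x powr \<alpha>)\<^sup>2" for x :: real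
    by (simp add: power2_eq_square powr_add[symmetric])
  have lim: "((\<lambda>y. LINT t|lborel. s y t) \<longlongrightarrow> (LINT t|lborel. f t)) at_top"
  proof (rule integral_dominated_convergence_at_top[where w=w])
    show "f \<in> borel_measurable lborel" unfolding f_def by measurable
    show "s y \<in> borel_measurable lborel" for y unfolding s_def by measurable
    show "integrable lborel w"
    proof (rule Bochner_Integration.integrable_bound[where f="\<lambda>t. 4 / B\<^sup>2 * Wn\<^sup>2 * indicator {-1..1} t"])
      show "integrable lborel (\<lambda>t::real. 4 / B\<^sup>2 * Wn\<^sup>2 * indicator {-1..1} t)"
        by (simp add: integrable_indicator_iff)
      show "AE t in lborel. norm (w t) \<le> norm (4 / B\<^sup>2 * Wn\<^sup>2 * indicator {- 1..1} t)"
      proof (intro AE_I2)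
        fix t :: real
        have "(cmod (ft W t))\<^sup>2 \<le> Wn\<^sup>2 * indicator {-1..1} t"
        proof (cases "\<bar>t\<bar> \<le> 1")
          case True
          then show ?thesis using ft_bound[of W t] by (auto simp: Wn_def indicator_def intro: power_mono)
        qed (use W_supp in auto)
        then have "4 / B\<^sup>2 * (cmod (ft W t))\<^sup>2 \<le> 4 / B\<^sup>2 * (Wn\<^sup>2 * indicator {-1..1} t)"
          using B_pos by (intro mult_left_mono) auto
        then show "norm (w t) \<le> norm (4 / B\<^sup>2 * Wn\<^sup>2 * indicator {- 1..1} t)"
          unfolding w_def by (simp add: mult_ac)
      qed
    qed (unfold w_def, measurable)
    show "AE t in lborel. ((\<lambda>y. s y t) \<longlongrightarrow> f t) at_top"
      using AE_lborel_singleton[of 0]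
    proof eventually_elim
      fix t :: real assume t: "t \<noteq> 0"
      have at: "0 < \<bar>t\<bar>" using t by simp
      have ty: "filterlim (\<lambda>y. t*y) at_infinity at_top"
        unfolding filterlim_at_infinity_conv_norm_at_top
        by (simp add: abs_mult) (rule filterlim_tendsto_pos_mult_at_top[OF tendsto_const at filterlim_abs_real])
      have Qt: "((\<lambda>y. Q (t*y)) \<longlongrightarrow> B) at_top" by (rule filterlim_compose[OF QB ty])
      have Lr: "((\<lambda>y. L (\<bar>t\<bar>*y) / L y) \<longlongrightarrow> 1) at_top"
        using L_sv at unfolding slowly_varying_def by blast
      have ev: "\<forall>\<^sub>F y in at_top. 0 < y \<and> 0 < Q (t*y) \<and> 0 < L (\<bar>t\<bar>*y) / L y"
        using eventually_gt_at_top[of 0] order_tendstoD(1)[OF Qt B_pos] order_tendstoD(1)[OF Lr zero_less_one]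
        by eventually_elim auto
      have eq: "\<forall>\<^sub>F y in at_top. s y t = \<bar>t\<bar> powr (2*\<alpha>) * (cmod (ft W t))\<^sup>2 / ((Q (t*y))\<^sup>2 * (L (\<bar>t\<bar>*y) / L y)\<^sup>2)"
        using ev
      proof eventually_elim
        fix y assume y: "0 < y \<and> 0 < Q (t*y) \<and> 0 < L (\<bar>t\<bar>*y) / L y"
        have Lt: "L (\<bar>t\<bar>*y) \<noteq> 0" using y by auto
        have Ly: "L y \<noteq> 0" using y by auto
        have Qe: "Q (t*y) = \<bar>t\<bar> powr \<alpha> * y powr \<alpha> * cmod (ou_cf \<alpha> F (t*y)) / L (\<bar>t\<bar>*y)"
          using y by (simp add: Q_def abs_mult powr_mult)
        have p1: "0 < \<bar>t\<bar> powr \<alpha>" "0 < y powr \<alpha>" "0 < cmod (ou_cf \<alpha> F (t*y))"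
          using at y phinz by auto
        show "s y t = \<bar>t\<bar> powr (2*\<alpha>) * (cmod (ft W t))\<^sup>2 / ((Q (t*y))\<^sup>2 * (L (\<bar>t\<bar>*y) / L y)\<^sup>2)"
          unfolding s_def Qe e2 using Lt Ly p1 by (simp add: field_simps power2_eq_square)
      qed
      have "((\<lambda>y. \<bar>t\<bar> powr (2*\<alpha>) * (cmod (ft W t))\<^sup>2 / ((Q (t*y))\<^sup>2 * (L (\<bar>t\<bar>*y) / L y)\<^sup>2))
            \<longlongrightarrow> \<bar>t\<bar> powr (2*\<alpha>) * (cmod (ft W t))\<^sup>2 / (B\<^sup>2 * 1\<^sup>2)) at_top"
        using B_pos by (intro tendsto_intros Qt Lr) auto
      then show "((\<lambda>y. s y t) \<longlongrightarrow> f t) at_top"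
        unfolding f_def using eq by (simp add: tendsto_cong)
    qed
    have hB: "B/2 < B" using B_pos by simp
    show "\<forall>\<^sub>F y in at_top. AE t in lborel. norm (s y t) \<le> w t"
      using eventually_gt_at_top[of 1] order_tendstoD(1)[OF QBtop hB]
    proof eventually_elim
      fix y assume y: "1 < y" "B/2 < Q y"
      show "AE t in lborel. norm (s y t) \<le> w t"
      proof (intro AE_I2)
        fix t
        have s0: "0 \<le> s y t" unfolding s_def by simp
        have w0: "0 \<le> w t" unfolding w_def by simp
        show "norm (s y t) \<le> w t"
        proof (cases "ft W t = 0 \<or> L y = 0")
          case True then show ?thesis using w0 by (auto simp: s_def)
        next
          case False
          then have ft0: "ft W t \<noteq> 0" and Lp: "0 < L y" using L_nonneg[of y] y by auto
          have t1: "\<bar>t\<bar> \<le> 1" using W_supp[of t] ft0 by force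
          define r where "r = L y / y powr \<alpha>"
          have ypos: "0 < y powr \<alpha>" using y by simp
          have r0: "0 < r" unfolding r_def using Lp ypos by simp
          have Qy: "Q y = cmod (ou_cf \<alpha> F y) / r"
            using y unfolding Q_def r_def by simp
          have "B/2 < cmod (ou_cf \<alpha> F y) / r" using y(2) Qy by simp
          then have r1: "r \<le> 2 * cmod (ou_cf \<alpha> F y) / B" using r0 B_pos by (simp add: field_simps)
          have mono: "cmod (ou_cf \<alpha> F y) \<le> cmod (ou_cf \<alpha> F (t*y))"
            by (rule norm_ou_cf_mono[OF F_prob F_sets apos kint]) (use t1 y in \<open>auto simp: abs_mult mult_left_le_one_le\<close>)
          have Phi: "0 < cmod (ou_cf \<alpha> F (t*y))" using phinz by simp
          have "r / cmod (ou_cf \<alpha> F (t*y)) \<le> 2 / B"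
            using r1 mono Phi B_pos by (simp add: field_simps)
          then have "(r / cmod (ou_cf \<alpha> F (t*y)))\<^sup>2 \<le> (2/B)\<^sup>2"
            using r0 Phi by (intro power_mono) auto
          moreover have "s y t = (r / cmod (ou_cf \<alpha> F (t*y)))\<^sup>2 * (cmod (ft W t))\<^sup>2"
            unfolding s_def r_def e2 by (simp add: power_divide power_mult_distrib)
          ultimately have "s y t \<le> (2/B)\<^sup>2 * (cmod (ft W t))\<^sup>2" by (simp add: mult_right_mono)
          then show ?thesis using s0 unfolding w_def by (simp add: power_divide)
        qed
      qed
    qed
  qed
  have ev2: "\<forall>\<^sub>F y in at_top. (LINT t|lborel. s y t) =
      (LINT t|lborel. inverse y powr (2*\<alpha>) * (L (1/inverse y))\<^sup>2 * (cmod (ft W t / ou_cf \<alpha> F (t/inverse y)))\<^sup>2)"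
    using eventually_gt_at_top[of 0]
  proof eventually_elim
    fix y :: real assume y: "0 < y"
    have ip: "inverse y powr (2*\<alpha>) = 1 / y powr (2*\<alpha>)"
      using y by (simp add: powr_def ln_inverse exp_minus divide_inverse)
    show "(LINT t|lborel. s y t) =
      (LINT t|lborel. inverse y powr (2*\<alpha>) * (L (1/inverse y))\<^sup>2 * (cmod (ft W t / ou_cf \<alpha> F (t/inverse y)))\<^sup>2)"
      by (rule Bochner_Integration.integral_cong) (simp_all add: s_def ip norm_divide power_divide divide_inverse norm_mult norm_inverse power_mult_distrib power_inverse)
  qed
  show ?thesis
    unfolding filterlim_at_right_to_top using lim unfolding f_def tendsto_cong[OF ev2] .
qed



theorem lemmaL55:
  fixes \<alpha> :: real and F :: "real measure" and W :: "real \<Rightarrow> real" and p :: nat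
    and L :: "real \<Rightarrow> real" and B :: real
    and dk ddk w1 w2 w3 :: "real \<Rightarrow> complex"
  assumes F_prob: "prob_space F" and F_sets: "sets F = sets borel"
    and F_pos: "measure F {..0} = 0"
    \<comment> \<open>(i)\<close>
    and cond_i: "\<exists>\<epsilon>>0. set_integrable lborel {0<..}
                   (\<lambda>x. max 1 (\<bar>x\<bar> powr (2 + \<epsilon>)) * kfun \<alpha> F x)"
    \<comment> \<open>(ii)\<close>
    and cond_ii: "kfun \<alpha> F 0 = \<alpha>" "2 < \<alpha>"
    \<comment> \<open>(iv)\<close>
    and dk: "\<And>u. (phik \<alpha> F has_vector_derivative dk u) (at u)"
    and ddk: "\<And>u. (dk has_vector_derivative ddk u) (at u)"
    and cond_iv: "\<exists>C. \<forall>u. cmod (phik \<alpha> F u) \<le> C / (1 + \<bar>u\<bar>)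
                        \<and> cmod (dk u) \<le> C / (1 + \<bar>u\<bar>)\<^sup>2
                        \<and> cmod (ddk u) \<le> C / (1 + \<bar>u\<bar>)\<^sup>2"
    \<comment> \<open>(v)\<close>
    and W_int: "integrable lborel W" and W_one: "(LINT x|lborel. W x) = 1"
    and W_mom: "integrable lborel (\<lambda>x. \<bar>x\<bar> ^ (p + 1) * \<bar>W x\<bar>)"
    and W_van: "\<And>l. 1 \<le> l \<Longrightarrow> l \<le> p \<Longrightarrow> (LINT x|lborel. x ^ l * W x) = 0"
    and W_supp: "\<And>u. \<bar>u\<bar> > 1 \<Longrightarrow> ft W u = 0"
    and w1: "\<And>u. (ft W has_vector_derivative w1 u) (at u)"
    and w2: "\<And>u. (w1 has_vector_derivative w2 u) (at u)"
    and w3: "\<And>u. (w2 has_vector_derivative w3 u) (at u)"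
    and w3_cont: "continuous_on UNIV w3"
    \<comment> \<open>slowly varying factor\<close>
    and L_nonneg: "\<And>x. x > 1 \<Longrightarrow> L x \<ge> 0"
    and L_sv: "slowly_varying L"
    and B_pos: "B > 0"
    and L_B: "((\<lambda>t. \<bar>t\<bar> powr \<alpha> * cmod (ou_cf \<alpha> F t) / L \<bar>t\<bar>) \<longlongrightarrow> B) at_infinity"
  shows "((\<lambda>h. complex_of_real (h powr (2 * \<alpha>) * (L (1 / h))\<^sup>2)
              * (LINT x|lborel. (Kn \<alpha> F W h x)\<^sup>2))
          \<longlongrightarrow> complex_of_real (1 / (2 * pi * B\<^sup>2)
                 * (LINT t|lborel. \<bar>t\<bar> powr (2 * \<alpha>) * (cmod (ft W t))\<^sup>2))) (at_right 0)"
proof -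
  have apos: "0 < \<alpha>" using cond_ii(2) by simp
  obtain \<epsilon> where ci: "set_integrable lborel {0<..} (\<lambda>x. max 1 (\<bar>x\<bar> powr (2 + \<epsilon>)) * kfun \<alpha> F x)"
    using cond_i by blast
  have kmeas[measurable]: "kfun \<alpha> F \<in> borel_measurable borel" by (rule k_meas0[OF F_prob F_sets])
  have k0: "0 \<le> kfun \<alpha> F x" for x using apos by (auto simp: kfun_def)
  have kint: "set_integrable lborel {0<..} (kfun \<alpha> F)"
    unfolding set_integrable_def
  proof (rule Bochner_Integration.integrable_bound[OF ci[unfolded set_integrable_def]])
    show "AE x in lborel. norm (indicator {0<..} x *\<^sub>R kfun \<alpha> F x)
        \<le> norm (indicator {0<..} x *\<^sub>R (max 1 (\<bar>x\<bar> powr (2 + \<epsilon>)) * kfun \<alpha> F x))"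
    proof (intro AE_I2)
      fix x :: real
      have "kfun \<alpha> F x \<le> max 1 (\<bar>x\<bar> powr (2 + \<epsilon>)) * kfun \<alpha> F x"
        using k0[of x] by (simp add: mult_le_cancel_right1)
      then show "norm (indicator {0<..} x *\<^sub>R kfun \<alpha> F x)
        \<le> norm (indicator {0<..} x *\<^sub>R (max 1 (\<bar>x\<bar> powr (2 + \<epsilon>)) * kfun \<alpha> F x))"
        using k0[of x] by (auto simp: indicator_def)
    qed
  qed measurable
  have ev: "\<forall>\<^sub>F h in at_right 0. complex_of_real (h powr (2 * \<alpha>) * (L (1 / h))\<^sup>2) * (LINT x|lborel. (Kn \<alpha> F W h x)\<^sup>2)
      = complex_of_real (1/(2*pi) * (LINT t|lborel. h powr (2*\<alpha>) * (L (1/h))\<^sup>2 * (cmod (ft W t / ou_cf \<alpha> F (t/h)))\<^sup>2))"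
    using eventually_at_right_less[of 0]
  proof eventually_elim
    fix h :: real assume h: "0 < h"
    show "complex_of_real (h powr (2 * \<alpha>) * (L (1 / h))\<^sup>2) * (LINT x|lborel. (Kn \<alpha> F W h x)\<^sup>2)
      = complex_of_real (1/(2*pi) * (LINT t|lborel. h powr (2*\<alpha>) * (L (1/h))\<^sup>2 * (cmod (ft W t / ou_cf \<alpha> F (t/h)))\<^sup>2))"
      using Kn_sq_integral[OF F_prob F_sets apos kint w1 W_supp h]
      by (simp add: mult_ac)
  qed
  have MLim: "((\<lambda>h. LINT t|lborel. h powr (2*\<alpha>) * (L (1/h))\<^sup>2 * (cmod (ft W t / ou_cf \<alpha> F (t/h)))\<^sup>2)
          \<longlongrightarrow> (LINT t|lborel. \<bar>t\<bar> powr (2*\<alpha>) * (cmod (ft W t))\<^sup>2 / B\<^sup>2)) (at_right 0)"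
    by (rule main_limit[OF F_prob F_sets apos kint w1 W_supp L_nonneg L_sv B_pos L_B])
  have "((\<lambda>h. complex_of_real (1/(2*pi) * (LINT t|lborel. h powr (2*\<alpha>) * (L (1/h))\<^sup>2 * (cmod (ft W t / ou_cf \<alpha> F (t/h)))\<^sup>2)))
       \<longlongrightarrow> complex_of_real (1/(2*pi) * (LINT t|lborel. \<bar>t\<bar> powr (2*\<alpha>) * (cmod (ft W t))\<^sup>2 / B\<^sup>2))) (at_right 0)"
    by (intro tendsto_intros MLim)
  moreover have "1/(2*pi) * (LINT t|lborel. \<bar>t\<bar> powr (2*\<alpha>) * (cmod (ft W t))\<^sup>2 / B\<^sup>2)
      = 1 / (2 * pi * B\<^sup>2) * (LINT t|lborel. \<bar>t\<bar> powr (2 * \<alpha>) * (cmod (ft W t))\<^sup>2)"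
    by simp
  ultimately show ?thesis using tendsto_cong[OF ev] by simp
qed


end
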